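(* Let $q$ be a prime power and $m,n$ positive integers, and set $$\Upsilon(m,n;q)=\frac{\phi(q^{mn}-1)}{mn}\, q^{m(m-1)(n-1)}\prod_{i=1}^{m-1}(q^m-q^i),$$ where $\phi$ is Euler's totient function. Then the number of primitive $\sigma$-LFSRs of order $n$ over $\mathbb{F}_{q^m}$ equals $\Upsilon(m,n;q)$ if and only if $$\left|\left\{T\in \mathrm{BCM}(m,n;q)\cap \mathrm{GL}_{mn}(\mathbb{F}_q) : o(T)=q^{mn}-1\right\}\right| = \Upsilon(m,n;q),$$ where $o(T)$ denotes the order of $T$ in the group $\mathrm{GL}_{mn}(\mathbb{F}_q)$.
   Context: Fix an $\mathbb{F}_q$-basis $\{\alpha_0,\dots,\alpha_{m-1}\}$ of $\mathbb{F}_{q^m}$ and, for $s\in\mathbb{F}_{q^m}$, let $\mathbf{s}\in\mathbb{F}_q^m$ (a row vector) be its coordinate vector. A $\sigma$-LFSR of order $n$ over $\mathbb{F}_{q^m}$ is given by an $n$-tuple $(C_0,\dots,C_{n-1})$ of $m\times m$ matrices over $\mathbb{F}_q$; given an initial state $(s_0,\dots,s_{n-1})\in\mathbb{F}_{q^m}^n$ it generates the sequence $(s_0,s_1,\dots)$ in $\mathbb{F}_{q^m}$ defined by $\mathbf{s}_{i+n}=\mathbf{s}_iC_0+\mathbf{s}_{i+1}C_1+\cdots+\mathbf{s}_{i+n-1}C_{n-1}$ for $i\ge 0$. A sequence $(s_j)$ is periodic with period $r$ if $r$ is the least positive integer with $s_{j+r}=s_j$ for all $j\ge 0$. The $\sigma$-LFSR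 is primitive if for every nonzero initial state the generated sequence is periodic with period $q^{mn}-1$. Two $\sigma$-LFSRs are counted as distinct when their coefficient tuples $(C_0,\dots,C_{n-1})$ differ. An $(m,n)$-block companion matrix over $\mathbb{F}_q$ is an $mn\times mn$ matrix, written in $n\times n$ blocks of size $m\times m$, whose last block column is $(C_0,C_1,\dots,C_{n-1})^{T}$ for some $C_0,\dots,C_{n-1}\in M_m(\mathbb{F}_q)$, whose block in position $(i+1,i)$ is the identity $I_m$ for $i=1,\dots,n-1$, and all of whose other blocks are zero; $\mathrm{BCM}(m,n;q)$ denotes the set of all such matrices. *)

theory Defs
  imports "Jordan_Normal_Form.Matrix" "HOL-Number_Theory.Totient"
begin

definition coeff_tuples :: "nat \<Rightarrow> nat \<Rightarrow> ('a::field) mat list set" where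
  "coeff_tuples m n = {C. length C = n \<and> set C \<subseteq> carrier_mat m m}"

text \<open>One step of the register: window (w_0,...,w_{n-1}) of row vectors in F_q^m
  is shifted and the new entry is w_0 C_0 + ... + w_{n-1} C_{n-1}.\<close>
definition lfsr_step :: "nat \<Rightarrow> nat \<Rightarrow> ('a::field) mat list \<Rightarrow> (nat \<Rightarrow> 'a vec) \<Rightarrow> (nat \<Rightarrow> 'a vec)" where
  "lfsr_step m n C w = (\<lambda>i. if i + 1 < n then w (i + 1)
      else vec m (\<lambda>k. \<Sum>j<n. \<Sum>l<m. (w j $ l) * ((C ! j) $$ (l, k))))"

text \<open>The generated sequence (in coordinates w.r.t. the fixed basis): s_k.\<close>
definition lfsr_seq :: "nat \<Rightarrow> nat \<Rightarrow> ('a::field) mat list \<Rightarrow> (nat \<Rightarrow> 'a vec) \<Rightarrow> nat \<Rightarrow> 'a vec" where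
  "lfsr_seq m n C s0 k = ((lfsr_step m n C ^^ k) s0) 0"

definition periodic_with_period :: "(nat \<Rightarrow> 'b) \<Rightarrow> nat \<Rightarrow> bool" where
  "periodic_with_period s r \<longleftrightarrow> 0 < r \<and> (\<forall>j. s (j + r) = s j) \<and>
     (\<forall>r'. 0 < r' \<and> r' < r \<longrightarrow> \<not> (\<forall>j. s (j + r') = s j))"

definition primitive_lfsr :: "nat \<Rightarrow> nat \<Rightarrow> ('a::{finite,field}) mat list \<Rightarrow> bool" where
  "primitive_lfsr m n C \<longleftrightarrow>
     (\<forall>s0. (\<forall>i<n. s0 i \<in> carrier_vec m) \<and> (\<exists>i<n. s0 i \<noteq> 0\<^sub>v m) \<longrightarrow>
        periodic_with_period (lfsr_seq m n C s0) (card (UNIV :: 'a set) ^ (m * n) - 1))"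

definition block_companion :: "nat \<Rightarrow> nat \<Rightarrow> ('a::field) mat list \<Rightarrow> 'a mat" where
  "block_companion m n C = mat (m * n) (m * n) (\<lambda>(r, c).
      if c div m = n - 1 then (C ! (r div m)) $$ (r mod m, c mod m)
      else if r div m = c div m + 1 \<and> r mod m = c mod m then 1 else 0)"

definition BCM :: "nat \<Rightarrow> nat \<Rightarrow> ('a::field) itself \<Rightarrow> 'a mat set" where
  "BCM m n ty = block_companion m n ` coeff_tuples m n"

definition mat_order :: "('a::field) mat \<Rightarrow> nat" where
  "mat_order T = (LEAST k. 0 < k \<and> T ^\<^sub>m k = 1\<^sub>m (dim_row T))"

definition Upsilon :: "nat \<Rightarrow> nat \<Rightarrow> nat \<Rightarrow> real" where
  "Upsilon m n q = real (totient (q ^ (m * n) - 1)) / real (m * n)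
     * real q ^ (m * (m - 1) * (n - 1)) * (\<Prod>i = 1..m - 1. real q ^ m - real q ^ i)"

end

theory Submission
  imports Defs "HOL-Library.Function_Algebras"
begin

definition per :: "('v \<Rightarrow> 'v) \<Rightarrow> 'v set \<Rightarrow> nat \<Rightarrow> bool" where
  "per f S k \<longleftrightarrow> (\<forall>x\<in>S. (f^^k) x = x)"

lemma add_funpow:
  fixes f :: "'v::ab_group_add \<Rightarrow> 'v"
  assumes "\<And>x y. f (x+y) = f x + f y"
  shows "(f^^k) (x+y) = (f^^k) x + (f^^k) y"
  by (induction k) (auto simp: assms)

lemma add_zero: fixes f :: "'v::ab_group_add \<Rightarrow> 'v"
  assumes "\<And>x y. f (x+y) = f x + f y" shows "f 0 = 0"
  using assms[of 0 0] by simp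

lemma add_neg: fixes f :: "'v::ab_group_add \<Rightarrow> 'v"
  assumes "\<And>x y. f (x+y) = f x + f y" shows "f (-x) = - f x"
proof -
  have a: "f 0 = 0" using assms[of 0 0] by simp
  have "f x + f (-x) = 0" using assms[of x "-x"] a by simp
  then show ?thesis using minus_unique[of "f x" "f (-x)"] by simp
qed

lemma add_diff: fixes f :: "'v::ab_group_add \<Rightarrow> 'v"
  assumes "\<And>x y. f (x+y) = f x + f y" shows "f (x - y) = f x - f y"
proof -
  have "f (x - y) = f (x + -y)" by simp
  also have "\<dots> = f x + f (-y)" using assms[of x "-y"] by simp
  also have "\<dots> = f x - f y" using add_neg[where f=f, OF assms] by simp
  finally show ?thesis .
qed

lemma add_ofnat: fixes f :: "'v::comm_ring_1 \<Rightarrow> 'v"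
  assumes "\<And>x y. f (x+y) = f x + f y" shows "f (of_nat k * y) = of_nat k * f y"
proof (induction k)
  case 0 show ?case using assms[of 0 0] by simp
next
  case (Suc k) show ?case using Suc assms[of y "of_nat k * y"] by (simp add: distrib_right)
qed

lemma card_fibres:
  fixes g :: "'v::ab_group_add \<Rightarrow> 'v"
  assumes fin: "finite S" and add: "\<And>x y. g (x+y) = g x + g y"
    and cl: "\<And>x y. x\<in>S \<Longrightarrow> y\<in>S \<Longrightarrow> x+y\<in>S" and neg: "\<And>x. x\<in>S \<Longrightarrow> -x\<in>S"
  shows "card S = card {v\<in>S. g v = 0} * card (g ` S)"
proof -
  define W where "W = {v\<in>S. g v = 0}"
  define F where "F = (\<lambda>u. {v\<in>S. g v = u})"
  have SU: "S = (\<Union>u\<in>g ` S. F u)" unfolding F_def by blast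
  have finF: "\<And>u. finite (F u)" unfolding F_def using fin by simp
  have disj: "\<forall>u\<in>g ` S. \<forall>u'\<in>g ` S. u \<noteq> u' \<longrightarrow> F u \<inter> F u' = {}" unfolding F_def by blast
  have c1: "card (\<Union>u\<in>g ` S. F u) = (\<Sum>u\<in>g ` S. card (F u))"
    using card_UN_disjoint[OF finite_imageI[OF fin] _ disj] finF by blast
  have c2: "card (F u) = card W" if uS: "u \<in> g ` S" for u
  proof -
    obtain v0 where v0: "v0 \<in> S" "g v0 = u" using uS by blast
    have "bij_betw (\<lambda>w. v0 + w) W (F u)"
    proof (rule bij_betw_byWitness[where f'="\<lambda>v. v - v0"])
      show "\<forall>a\<in>W. (\<lambda>v. v - v0) ((\<lambda>w. v0 + w) a) = a" by simp
      show "\<forall>a\<in>F u. (\<lambda>w. v0 + w) ((\<lambda>v. v - v0) a) = a" by simp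
      show "(\<lambda>w. v0 + w) ` W \<subseteq> F u"
      proof
        fix z assume "z \<in> (\<lambda>w. v0 + w) ` W"
        then obtain w where w: "w \<in> W" "z = v0 + w" by blast
        have "g z = g v0 + g w" using w(2) add by simp
        then show "z \<in> F u" using w v0 cl unfolding W_def F_def by simp
      qed
      show "(\<lambda>v. v - v0) ` F u \<subseteq> W"
      proof
        fix z assume "z \<in> (\<lambda>v. v - v0) ` F u"
        then obtain v where v: "v \<in> F u" and z: "z = v - v0" by blast
        have vS: "v \<in> S" "g v = u" using v unfolding F_def by auto
        have e: "v - v0 = v + - v0" by simp
        have zS: "z \<in> S" unfolding z e using cl[OF vS(1) neg[OF v0(1)]] .
        have "g z = g v - g v0" unfolding z by (rule add_diff[where f=g, OF add])
        then have "g z = 0" using vS v0 by simp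
        then show "z \<in> W" using zS unfolding W_def by simp
      qed
    qed
    then show ?thesis by (metis bij_betw_same_card)
  qed
  have "card S = (\<Sum>u\<in>g ` S. card (F u))" using c1 SU by simp
  also have "\<dots> = (\<Sum>u\<in>g ` S. card W)" using c2 by simp
  also have "\<dots> = card W * card (g ` S)" by simp
  finally show ?thesis unfolding W_def .
qed

locale core =
  fixes V :: "'v::comm_ring_1 set" and f :: "'v \<Rightarrow> 'v" and Q M :: nat
  assumes fin: "finite V" and zV: "0 \<in> V" and addV: "\<And>x y. x\<in>V \<Longrightarrow> y\<in>V \<Longrightarrow> x+y\<in>V"
    and negV: "\<And>x. x\<in>V \<Longrightarrow> -x\<in>V"
    and fV: "\<And>x. x\<in>V \<Longrightarrow> f x \<in> V" and fadd: "\<And>x y. f (x+y) = f x + f y"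
    and perM: "\<And>x. x\<in>V \<Longrightarrow> (f^^M) x = x" and Mpos: "0<M"
    and Qz: "\<And>x. x\<in>V \<Longrightarrow> of_nat Q * x = 0" and cop: "coprime Q M"
begin

definition sub :: "'v set \<Rightarrow> bool" where
  "sub S \<longleftrightarrow> S \<subseteq> V \<and> 0\<in>S \<and> (\<forall>x y. x\<in>S \<longrightarrow> y\<in>S \<longrightarrow> x+y\<in>S) \<and> (\<forall>x\<in>S. -x\<in>S) \<and> (\<forall>x\<in>S. f x \<in> S)"

lemma subV: "sub V" using zV addV negV fV by (auto simp: sub_def)

lemma fkadd: "(f^^k) (x+y) = (f^^k) x + (f^^k) y" by (induction k) (auto simp: fadd)

lemma fkS: "sub S \<Longrightarrow> x\<in>S \<Longrightarrow> (f^^k) x \<in> S"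
  by (induction k) (auto simp: sub_def)

lemma perMk: "x\<in>V \<Longrightarrow> (f^^(M*k)) x = x"
proof (induction k)
  case (Suc k)
  have "(f^^(M*Suc k)) x = (f^^M) ((f^^(M*k)) x)" by (simp add: funpow_add)
  then show ?case using Suc perM by simp
qed simp

lemma finj: assumes "x\<in>V" "y\<in>V" "(f^^k) x = (f^^k) y" shows "x = y"
proof -
  have k: "k \<le> M*k" using Mpos by simp
  have e: "M*k = (M*k - k) + k" using k by simp
  have g: "\<And>z. (f^^((M*k - k) + k)) z = (f^^(M*k - k)) ((f^^k) z)" by (simp add: funpow_add)
  have "x = (f^^(M*k)) x" using assms perMk by simp
  also have "\<dots> = (f^^(M*k - k)) ((f^^k) x)" using g e by metis
  also have "\<dots> = (f^^(M*k - k)) ((f^^k) y)" using assms by simp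
  also have "\<dots> = (f^^(M*k)) y" using g e by metis
  also have "\<dots> = y" using assms perMk by simp
  finally show ?thesis .
qed

lemma per_mult: assumes "sub S" "per f S a" shows "per f S (a*c)"
  unfolding per_def
proof
  fix x assume x: "x\<in>S"
  show "(f^^(a*c)) x = x"
  proof (induction c)
    case (Suc c)
    have "(f^^(a*Suc c)) x = (f^^a) ((f^^(a*c)) x)" by (simp add: funpow_add)
    then show ?case using Suc assms x by (simp add: per_def)
  qed simp
qed

lemma per_mod: assumes "sub S" "per f S a" "per f S b" shows "per f S (a mod b)"
  unfolding per_def
proof
  fix x assume x: "x\<in>S"
  have "(f^^a) x = (f^^(a mod b)) ((f^^(b*(a div b))) x)"
  proof -
    have "(f^^a) x = (f^^(a mod b + b*(a div b))) x" by (simp only: mod_mult_div_eq)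
    also have "\<dots> = (f^^(a mod b)) ((f^^(b*(a div b))) x)" by (simp only: funpow_add comp_apply)
    finally show ?thesis .
  qed
  then show "(f^^(a mod b)) x = x" using per_mult[OF assms(1,3)] assms x by (simp add: per_def)
qed

lemma per_gcd: assumes "sub S" shows "per f S a \<Longrightarrow> per f S b \<Longrightarrow> per f S (gcd a b)"
proof (induction a b rule: gcd_nat_induct)
  case (step m n)
  have "per f S (m mod n)" using per_mod[OF assms, of m n] step by blast
  then have "per f S (gcd n (m mod n))" using step by blast
  then show ?case using gcd_non_0_nat[of n m] step(1) by simp
qed simp

lemma commute: "(f^^a) ((f^^b) x) = (f^^b) ((f^^a) x)"
proof -
  have "(f^^a) ((f^^b) x) = (f^^(a+b)) x" by (simp add: funpow_add)
  also have "\<dots> = (f^^(b+a)) x" by (simp add: add.commute)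
  also have "\<dots> = (f^^b) ((f^^a) x)" by (simp add: funpow_add)
  finally show ?thesis .
qed


lemma subfin: "sub S \<Longrightarrow> finite S" using fin by (auto simp: sub_def intro: finite_subset)

lemma fk0: "(f^^k) 0 = 0"
  using fkadd[of k 0 0] by simp

lemma fkdiff: "(f^^k) (a - b) = (f^^k) a - (f^^k) b"
proof -
  have "(f^^k) (a - b + b) = (f^^k) (a - b) + (f^^k) b" by (rule fkadd)
  then show ?thesis by (simp add: algebra_simps)
qed

lemma fkofnat: "(f^^k) (of_nat c * y) = of_nat c * (f^^k) y"
proof (induction c)
  case 0 show ?case by (simp add: fk0)
next
  case (Suc c) show ?case using Suc fkadd[of k y "of_nat c * y"] by (simp add: distrib_right)
qed

lemma step:
  assumes S: "sub S" and x: "x\<in>S" "x\<noteq>0" and r: "0<r" "(f^^r) x = x"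
    and rmin: "\<forall>k. 0<k \<and> k<r \<longrightarrow> (f^^k) x \<noteq> x"
  shows "card S = card {v\<in>S. (f^^r) v = v} * card ((\<lambda>v. (f^^r) v - v) ` S)"
    and "r + 1 \<le> card {v\<in>S. (f^^r) v = v}"
    and "sub ((\<lambda>v. (f^^r) v - v) ` S)"
    and "\<And>e. 0<e \<Longrightarrow> per f ((\<lambda>v. (f^^r) v - v) ` S) e \<Longrightarrow> \<exists>L>0. L \<le> r*e \<and> per f S L"
proof -
  define \<phi> where "\<phi> = (\<lambda>v. (f^^r) v - v)"
  have SV: "S \<subseteq> V" using S by (simp add: sub_def)
  have finS: "finite S" using subfin[OF S] .
  have clS: "\<And>a b. a\<in>S \<Longrightarrow> b\<in>S \<Longrightarrow> a+b\<in>S" "\<And>a. a\<in>S \<Longrightarrow> -a\<in>S" "0\<in>S"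
    "\<And>a. a\<in>S \<Longrightarrow> f a\<in>S" using S by (auto simp: sub_def)
  have diffS: "\<And>a b. a\<in>S \<Longrightarrow> b\<in>S \<Longrightarrow> a-b\<in>S"
    using clS by (metis diff_conv_add_uminus)
  have phiadd: "\<And>a b. \<phi> (a+b) = \<phi> a + \<phi> b" unfolding \<phi>_def by (simp add: fkadd algebra_simps)
  have W: "{v\<in>S. \<phi> v = 0} = {v\<in>S. (f^^r) v = v}" unfolding \<phi>_def by auto
  show "card S = card {v\<in>S. (f^^r) v = v} * card ((\<lambda>v. (f^^r) v - v) ` S)"
    using card_fibres[where g=\<phi>, OF finS phiadd clS(1,2)] W unfolding \<phi>_def by simp
  let ?O = "(\<lambda>i. (f^^i) x) ` {..<r}"
  have inj: "inj_on (\<lambda>i. (f^^i) x) {..<r}"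
  proof (rule inj_onI)
    fix i j assume ij: "i \<in> {..<r}" "j \<in> {..<r}" "(f^^i) x = (f^^j) x"
    show "i = j"
    proof (rule ccontr)
      assume ne: "i \<noteq> j"
      have xV: "x \<in> V" using x SV by auto
      have gen: "\<And>a b. a < b \<Longrightarrow> b < r \<Longrightarrow> (f^^a) x = (f^^b) x \<Longrightarrow> False"
      proof -
        fix a b assume ab: "a < b" "b < r" "(f^^a) x = (f^^b) x"
        have e: "(f^^(a + (b-a))) x = (f^^a) ((f^^(b-a)) x)" by (simp only: funpow_add comp_apply)
        have "(f^^b) x = (f^^a) ((f^^(b-a)) x)" using ab(1) e by simp
        then have "(f^^a) x = (f^^a) ((f^^(b-a)) x)" using ab by simp
        moreover have xb: "(f^^(b-a)) x \<in> V" using fkS[OF subV xV] .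
        ultimately have xe: "x = (f^^(b-a)) x" using finj[OF xV xb] by simp
        have "0 < b - a \<and> b - a < r" using ab by auto
        then have "(f^^(b-a)) x \<noteq> x" using rmin by simp
        then show False using xe by simp
      qed
      show False using ne ij gen[of i j] gen[of j i] by (cases "i<j") auto
    qed
  qed
  have Osub: "insert 0 ?O \<subseteq> {v\<in>S. (f^^r) v = v}"
  proof -
    have "\<And>i. (f^^i) x \<in> S" using fkS[OF S x(1)] .
    moreover have "\<And>i. (f^^r) ((f^^i) x) = (f^^i) x" using commute[of r _ x] r by simp
    ultimately show ?thesis using clS(3) fk0 by auto
  qed
  have O0: "0 \<notin> ?O"
  proof
    assume "0 \<in> ?O"
    then obtain i where "(f^^i) x = 0" by auto
    then have "(f^^i) x = (f^^i) 0" using fk0 by simp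
    then show False using finj[of x 0 i] x SV zV by auto
  qed
  have "card (insert 0 ?O) = r + 1" using O0 inj by (simp add: card_image)
  moreover have "finite {v\<in>S. (f^^r) v = v}" using finS by simp
  ultimately show "r + 1 \<le> card {v\<in>S. (f^^r) v = v}" using card_mono[OF _ Osub] by simp
  let ?U = "(\<lambda>v. (f^^r) v - v) ` S"
  have U: "?U = \<phi> ` S" unfolding \<phi>_def ..
  have phiS: "\<And>v. v\<in>S \<Longrightarrow> \<phi> v \<in> S" unfolding \<phi>_def using diffS fkS[OF S] by blast
  have phi0: "\<phi> 0 = 0" unfolding \<phi>_def by (simp add: fk0)
  have phineg: "\<And>a. \<phi> (-a) = - \<phi> a" unfolding \<phi>_def using fkdiff[of r 0] by (simp add: fk0)
  have phif: "\<And>a. f (\<phi> a) = \<phi> (f a)" unfolding \<phi>_def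
    using add_diff[where f=f, OF fadd] commute[of 1 r] by simp
  show subU: "sub ?U" unfolding U sub_def
  proof (intro conjI allI impI ballI)
    show "\<phi> ` S \<subseteq> V" using phiS SV by auto
    show "0 \<in> \<phi> ` S" using phi0 clS(3) by (metis image_eqI)
    fix a b assume "a \<in> \<phi> ` S" "b \<in> \<phi> ` S"
    then show "a + b \<in> \<phi> ` S" using phiadd clS(1) by (auto, metis image_eqI)
  next
    fix a assume "a \<in> \<phi> ` S"
    then show "-a \<in> \<phi> ` S" using phineg clS(2) by (auto, metis image_eqI)
  next
    fix a assume "a \<in> \<phi> ` S"
    then obtain b where b: "b \<in> S" "a = \<phi> b" by blast
    then have "f a = \<phi> (f b)" using phif by simp
    then show "f a \<in> \<phi> ` S" using clS(4)[OF b(1)] by blast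
  qed
  fix e assume e: "0 < e" "per f ?U e"
  define L0 where "L0 = r * e"
  have L0: "0 < L0" using e r unfolding L0_def by simp
  have perU: "per f ?U L0" unfolding L0_def using per_mult[OF subU e(2), of r] by (simp add: mult.commute)
  have inU: "\<And>v k. v\<in>S \<Longrightarrow> (f^^(r*k)) v - v \<in> ?U"
  proof -
    fix v k assume v: "v \<in> S"
    show "(f^^(r*k)) v - v \<in> ?U"
    proof (induction k)
      case 0 show ?case using subU by (simp add: sub_def)
    next
      case (Suc k)
      have "(f^^(r*Suc k)) v - v = ((f^^r) ((f^^(r*k)) v) - (f^^(r*k)) v) + ((f^^(r*k)) v - v)"
        by (simp add: funpow_add)
      moreover have "(f^^r) ((f^^(r*k)) v) - (f^^(r*k)) v \<in> ?U" using fkS[OF S v] by blast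
      moreover have "\<And>a b. a \<in> ?U \<Longrightarrow> b \<in> ?U \<Longrightarrow> a+b \<in> ?U" using subU unfolding sub_def by blast
      ultimately show ?case using Suc by presburger
    qed
  qed
  have hU: "\<And>v. v\<in>S \<Longrightarrow> (f^^L0) v - v \<in> ?U" unfolding L0_def using inU by blast
  have iter: "\<And>v k. v\<in>S \<Longrightarrow> (f^^(L0*k)) v = v + of_nat k * ((f^^L0) v - v)"
  proof -
    fix v k assume v: "v\<in>S"
    let ?h = "(f^^L0) v - v"
    have hfix: "(f^^L0) ?h = ?h" using perU hU[OF v] unfolding per_def by blast
    show "(f^^(L0*k)) v = v + of_nat k * ?h"
    proof (induction k)
      case (Suc k)
      have "(f^^(L0*Suc k)) v = (f^^L0) ((f^^(L0*k)) v)" by (simp add: funpow_add)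
      also have "\<dots> = (f^^L0) v + of_nat k * ?h" using Suc by (simp only: fkadd fkofnat hfix)
      also have "\<dots> = v + of_nat (Suc k) * ?h" by (simp add: algebra_simps)
      finally show ?case .
    qed simp
  qed
  have perQ: "per f S (L0*Q)" unfolding per_def
  proof
    fix v assume v: "v\<in>S"
    have "(f^^L0) v - v \<in> V" using hU[OF v] subU unfolding sub_def by blast
    then show "(f^^(L0*Q)) v = v" using iter[OF v, of Q] Qz by simp
  qed
  have perMS: "per f S M" using perM SV by (auto simp: per_def)
  have g: "per f S (gcd (L0*Q) M)" using per_gcd[OF S perQ perMS] .
  have "gcd (L0*Q) M = gcd L0 M" using cop by (intro gcd_mult_left_right_cancel) (simp add: coprime_commute)
  then have pg: "per f S (gcd L0 M)" using g by simp
  have "0 < gcd L0 M" using Mpos by simp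
  moreover have "gcd L0 M \<le> r * e" using L0 unfolding L0_def by (simp add: gcd_le1_nat)
  ultimately show "\<exists>L>0. L \<le> r*e \<and> per f S L" using pg by blast
qed


lemma least_period:
  assumes xV: "x \<in> V"
  shows "\<exists>r. 0<r \<and> (f^^r) x = x \<and> (\<forall>k. 0<k \<and> k<r \<longrightarrow> (f^^k) x \<noteq> x)
    \<and> (\<forall>k. 0<k \<and> (f^^k) x = x \<longrightarrow> r \<le> k)"
proof -
  define r where "r = (LEAST r. 0<r \<and> (f^^r) x = x)"
  have ex: "0<M \<and> (f^^M) x = x" using Mpos perM xV by simp
  have r: "0<r \<and> (f^^r) x = x" unfolding r_def by (rule LeastI[of _ M], rule ex)
  have rmin: "\<forall>k. 0<k \<and> k<r \<longrightarrow> (f^^k) x \<noteq> x" unfolding r_def using not_less_Least by blast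
  have rle: "\<forall>k. 0<k \<and> (f^^k) x = x \<longrightarrow> r \<le> k" unfolding r_def by (simp add: Least_le)
  show ?thesis using r rmin rle by blast
qed

lemma nonzero_in: assumes "sub S" "S \<noteq> {0}" obtains x where "x \<in> S" "x \<noteq> 0"
  using assms by (auto simp: sub_def)

lemma G: "sub S \<Longrightarrow> S \<noteq> {0} \<Longrightarrow> \<exists>e>0. e + 1 \<le> card S \<and> per f S e"
proof (induction "card S" arbitrary: S rule: less_induct)
  case less
  obtain x where x: "x\<in>S" "x\<noteq>0" using nonzero_in[OF less.prems] by blast
  have SV: "S \<subseteq> V" using less.prems(1) by (simp add: sub_def)
  have xV: "x \<in> V" using x SV by auto
  obtain r where r: "0<r" "(f^^r) x = x" and rmin': "\<forall>k. 0<k \<and> k<r \<longrightarrow> (f^^k) x \<noteq> x"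
    using least_period[OF xV] by blast
  note st = step[OF less.prems(1) x r rmin']
  let ?W = "{v\<in>S. (f^^r) v = v}"
  let ?U = "(\<lambda>v. (f^^r) v - v) ` S"
  have finS: "finite S" using subfin[OF less.prems(1)] .
  show ?case
  proof (cases "?U = {0}")
    case True
    have "per f S r" unfolding per_def
    proof
      fix v assume "v \<in> S"
      then have "(f^^r) v - v \<in> ?U" by blast
      then show "(f^^r) v = v" using True by simp
    qed
    moreover have "card ?W \<le> card S" using finS by (intro card_mono) auto
    ultimately show ?thesis using st(2) r(1) by (intro exI[of _ r]) simp
  next
    case False
    have "?U \<noteq> {}" using x by blast
    then have cU: "card ?U \<ge> 1" using finS by (simp add: Suc_le_eq card_gt_0_iff)
    have cW: "card ?W \<ge> 2" using st(2) r(1) by simp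
    have lt: "card ?U < card S" unfolding st(1) using cU cW by simp
    obtain e where e: "e>0" "e + 1 \<le> card ?U" "per f ?U e" using less.hyps[OF lt st(3) False] by blast
    obtain L where L: "L>0" "L \<le> r*e" "per f S L" using st(4)[OF e(1) e(3)] by blast
    have "(r+1)*(e+1) \<le> card ?W * card ?U" using st(2) e(2) by (rule mult_le_mono)
    then have "L + 1 \<le> card S" unfolding st(1) using L(2) by (simp add: algebra_simps)
    then show ?thesis using L by blast
  qed
qed

lemma main:
  assumes cardV: "card V = M + 1" and nper: "\<And>k. 0<k \<Longrightarrow> k<M \<Longrightarrow> \<not> per f V k"
    and x: "x \<in> V" "x \<noteq> 0" and k: "0<kk" "(f^^kk) x = x"
  shows "M \<le> kk"
proof (rule ccontr)
  assume "\<not> M \<le> kk"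
  then have kM: "kk < M" by simp
  obtain r where r: "0<r" "(f^^r) x = x" and rmin': "\<forall>j. 0<j \<and> j<r \<longrightarrow> (f^^j) x \<noteq> x"
    and rle: "\<forall>j. 0<j \<and> (f^^j) x = x \<longrightarrow> r \<le> j"
    using least_period[OF x(1)] by blast
  have "r \<le> kk" using rle k by blast
  then have rM: "r < M" using kM by simp
  note st = step[OF subV x r rmin']
  let ?W = "{v\<in>V. (f^^r) v = v}"
  let ?U = "(\<lambda>v. (f^^r) v - v) ` V"
  have U0: "?U \<noteq> {0}"
  proof
    assume True: "?U = {0}"
    have "per f V r" unfolding per_def
    proof
      fix v assume "v \<in> V"
      then have "(f^^r) v - v \<in> ?U" by blast
      then show "(f^^r) v = v" using True by simp
    qed
    then show False using nper r(1) rM by blast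
  qed
  obtain e where e: "e>0" "e + 1 \<le> card ?U" "per f ?U e" using G[OF st(3) U0] by blast
  obtain L where L: "L>0" "L \<le> r*e" "per f V L" using st(4)[OF e(1) e(3)] by blast
  have "(r+1)*(e+1) \<le> card ?W * card ?U" using st(2) e(2) by (rule mult_le_mono)
  then have "L + 2 \<le> M + 1" using st(1) cardV L(2) r(1) e(1) by (simp add: algebra_simps)
  then have "L < M" by simp
  then show False using nper L by blast
qed

end

definition fmap :: "nat \<Rightarrow> 'a::field mat \<Rightarrow> (nat \<Rightarrow> 'a) \<Rightarrow> (nat \<Rightarrow> 'a)" where
  "fmap N T x = (\<lambda>c. if c < N then (\<Sum>r<N. x r * T $$ (r,c)) else 0)"

definition VV :: "nat \<Rightarrow> (nat \<Rightarrow> 'a::zero) set" where "VV N = {x. \<forall>i\<ge>N. x i = 0}"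

lemma fmap_add: "fmap N T (x+y) = fmap N T x + fmap N T y"
  by (auto simp: fmap_def fun_eq_iff sum.distrib distrib_right)

lemma fmap_VV: "fmap N T x \<in> VV N" by (auto simp: fmap_def VV_def)

lemma fmap_mult:
  assumes A: "A \<in> carrier_mat N N" and B: "B \<in> carrier_mat N N"
  shows "fmap N (A*B) x = fmap N B (fmap N A x)"
proof (rule ext)
  fix c
  show "fmap N (A*B) x c = fmap N B (fmap N A x) c"
  proof (cases "c < N")
    case True
    have "fmap N (A*B) x c = (\<Sum>r<N. x r * (\<Sum>s<N. A $$ (r,s) * B $$ (s,c)))"
      using True A B by (simp add: fmap_def scalar_prod_def row_def col_def atLeast0LessThan)
    also have "\<dots> = (\<Sum>r<N. \<Sum>s<N. x r * A $$ (r,s) * B $$ (s,c))"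
      by (simp add: sum_distrib_left mult.assoc)
    also have "\<dots> = (\<Sum>s<N. \<Sum>r<N. x r * A $$ (r,s) * B $$ (s,c))" by (rule sum.swap)
    also have "\<dots> = (\<Sum>s<N. (\<Sum>r<N. x r * A $$ (r,s)) * B $$ (s,c))"
      by (simp add: sum_distrib_right)
    also have "\<dots> = fmap N B (fmap N A x) c" using True by (simp add: fmap_def)
    finally show ?thesis .
  qed (simp add: fmap_def)
qed

lemma fmap_one: assumes "x \<in> VV N" shows "fmap N (1\<^sub>m N) x = x"
proof (rule ext)
  fix c show "fmap N (1\<^sub>m N) x c = x c"
  proof (cases "c < N")
    case True
    have "fmap N (1\<^sub>m N) x c = (\<Sum>r<N. x r * (if r = c then 1 else 0))"
      using True by (simp add: fmap_def)
    also have "\<dots> = (\<Sum>r<N. if r = c then x r else 0)" by (rule sum.cong) auto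
    also have "\<dots> = x c" using True by simp
    finally show ?thesis .
  qed (use assms in \<open>simp add: fmap_def VV_def\<close>)
qed

lemma fmap_zero: "fmap N T 0 = 0" by (simp add: fmap_def fun_eq_iff)

lemma fmap_pow:
  assumes T: "T \<in> carrier_mat N N" and x: "x \<in> VV N"
  shows "(fmap N T ^^ k) x = fmap N (T ^\<^sub>m k) x"
proof (induction k)
  case 0
  have "T ^\<^sub>m 0 = 1\<^sub>m N" using T by simp
  then show ?case using fmap_one[OF x] by simp
next
  case (Suc k)
  have "(fmap N T ^^ Suc k) x = fmap N T (fmap N (T ^\<^sub>m k) x)" using Suc by simp
  also have "\<dots> = fmap N (T ^\<^sub>m k * T) x" using fmap_mult[of "T ^\<^sub>m k" N T x] T by simp
  finally show ?case by simp
qed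

lemma fmap_ind:
  assumes "A \<in> carrier_mat N N" "r < N" "c < N"
  shows "fmap N A (\<lambda>t. if t = r then 1 else 0) c = A $$ (r,c)"
proof -
  have "fmap N A (\<lambda>t. if t = r then 1 else 0) c = (\<Sum>t<N. (if t = r then 1 else 0) * A $$ (t,c))"
    using assms by (simp add: fmap_def)
  also have "\<dots> = (\<Sum>t<N. if t = r then A $$ (t,c) else 0)" by (rule sum.cong) auto
  also have "\<dots> = A $$ (r,c)" using assms by simp
  finally show ?thesis .
qed

lemma fmap_eq_mat:
  assumes A: "A \<in> carrier_mat N N" and B: "B \<in> carrier_mat N N"
    and eq: "\<And>x. x \<in> VV N \<Longrightarrow> fmap N A x = fmap N B x"
  shows "A = B"
proof (rule eq_matI)
  fix i j assume ij: "i < dim_row B" "j < dim_col B"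
  have x: "(\<lambda>t. if t = i then (1::'a) else 0) \<in> VV N" using ij B by (auto simp: VV_def)
  show "A $$ (i,j) = B $$ (i,j)" using fmap_ind[OF A, of i j] fmap_ind[OF B, of i j] eq[OF x] ij B by simp
qed (use A B in auto)

lemma per_iff_pow:
  assumes T: "T \<in> carrier_mat N N"
  shows "per (fmap N T) (VV N) k \<longleftrightarrow> T ^\<^sub>m k = 1\<^sub>m N"
proof
  assume p: "per (fmap N T) (VV N) k"
  have "\<And>x :: nat \<Rightarrow> 'a. x \<in> VV N \<Longrightarrow> fmap N (T ^\<^sub>m k) x = fmap N (1\<^sub>m N) x"
  proof -
    fix x :: "nat \<Rightarrow> 'a" assume x: "x \<in> VV N"
    have "fmap N (T ^\<^sub>m k) x = (fmap N T ^^ k) x" using fmap_pow[OF T x] by simp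
    also have "\<dots> = x" using p x by (simp add: per_def)
    also have "\<dots> = fmap N (1\<^sub>m N) x" using fmap_one[OF x] by simp
    finally show "fmap N (T ^\<^sub>m k) x = fmap N (1\<^sub>m N) x" .
  qed
  then show "T ^\<^sub>m k = 1\<^sub>m N" using T by (intro fmap_eq_mat) auto
next
  assume "T ^\<^sub>m k = 1\<^sub>m N"
  then show "per (fmap N T) (VV N) k" unfolding per_def
  proof (intro ballI)
    fix x :: "nat \<Rightarrow> 'a" assume x: "x \<in> VV N"
    show "(fmap N T ^^ k) x = x" using fmap_pow[OF T x, of k] fmap_one[OF x] \<open>T ^\<^sub>m k = 1\<^sub>m N\<close> by simp
  qed
qed

lemma VV_lists: "VV N = (\<lambda>xs i. if i < N then xs ! i else (0::'a::zero)) ` {xs. set xs \<subseteq> UNIV \<and> length xs = N}"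
proof -
  have A: "x \<in> (\<lambda>xs i. if i < N then xs ! i else (0::'a)) ` {xs. set xs \<subseteq> UNIV \<and> length xs = N}"
    if x: "x \<in> VV N" for x :: "nat \<Rightarrow> 'a"
  proof -
    have "x = (\<lambda>i. if i < N then map x [0..<N] ! i else 0)" using x by (auto simp: VV_def fun_eq_iff)
    moreover have "map x [0..<N] \<in> {xs. set xs \<subseteq> UNIV \<and> length xs = N}" by simp
    ultimately show ?thesis by (rule image_eqI)
  qed
  have B: "(\<lambda>xs i. if i < N then xs ! i else (0::'a)) ` {xs. set xs \<subseteq> UNIV \<and> length xs = N} \<subseteq> VV N"
    by (auto simp: VV_def)
  show ?thesis using A B by blast
qed

lemma VV_inj: "inj_on (\<lambda>xs i. if i < N then xs ! i else (0::'a::zero)) {xs. set xs \<subseteq> UNIV \<and> length xs = N}"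
proof (rule inj_onI)
  fix xs ys :: "'a list"
  assume xs: "xs \<in> {xs. set xs \<subseteq> UNIV \<and> length xs = N}" and ys: "ys \<in> {xs. set xs \<subseteq> UNIV \<and> length xs = N}"
    and eq: "(\<lambda>i. if i < N then xs ! i else 0) = (\<lambda>i. if i < N then ys ! i else 0)"
  have "\<And>i. i < N \<Longrightarrow> xs ! i = ys ! i" using eq by (metis (mono_tags))
  then show "xs = ys" using xs ys by (auto intro: nth_equalityI)
qed

lemma card_VV: "card (VV N :: (nat \<Rightarrow> 'a::{finite,zero}) set) = card (UNIV::'a set) ^ N"
proof -
  have "card (VV N :: (nat \<Rightarrow> 'a) set) = card {xs :: 'a list. set xs \<subseteq> UNIV \<and> length xs = N}"
    unfolding VV_lists by (rule card_image[OF VV_inj])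
  also have "\<dots> = card (UNIV::'a set) ^ N" by (rule card_lists_length_eq) simp
  finally show ?thesis .
qed

lemma finite_VV: "finite (VV N :: (nat \<Rightarrow> 'a::{finite,zero}) set)"
  unfolding VV_lists by (rule finite_imageI) (rule finite_lists_length_eq[OF finite_UNIV])

lemma of_nat_card_zero: "of_nat (card (UNIV::'a::{finite,comm_ring_1} set)) = (0::'a)"
proof -
  have "(\<Sum>a\<in>(UNIV::'a set). a + 1) = (\<Sum>a\<in>(UNIV::'a set). a)"
    by (rule sum.reindex_bij_witness[where i="\<lambda>a. a - 1" and j="\<lambda>a. a + 1"]) auto
  then have "(\<Sum>a\<in>(UNIV::'a set). a) + of_nat (card (UNIV::'a set)) = (\<Sum>a\<in>(UNIV::'a set). a)"
    by (simp add: sum.distrib)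
  then show ?thesis by simp
qed

lemma card_ge2: "2 \<le> card (UNIV::'a::{finite,field} set)"
proof -
  have "card {0::'a, 1} = 2" by simp
  moreover have "card {0::'a, 1} \<le> card (UNIV::'a set)" by (rule card_mono) auto
  ultimately show ?thesis by simp
qed

lemma coprime_pow_minus1:
  fixes Q N :: nat assumes "0 < N" "1 \<le> Q"
  shows "coprime Q (Q^N - 1)"
proof (rule coprimeI)
  fix d assume d: "d dvd Q" "d dvd Q^N - 1"
  have "d dvd Q^N" using d(1) assms(1) by (simp add: dvd_power_iff_le dvd_trans[OF d(1)] dvd_power)
  then have "d dvd Q^N - (Q^N - 1)" using d(2) by (rule dvd_diff_nat)
  moreover have "Q^N - (Q^N - 1) = 1" using assms by simp
  ultimately show "is_unit d" by simp
qed

lemma fmap_pow_zero: "(fmap N T ^^ k) 0 = 0"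
  by (induction k) (simp_all add: fmap_def fun_eq_iff)

lemma key_core:
  fixes T :: "'a::{finite,field} mat"
  assumes T: "T \<in> carrier_mat N N" and N: "0 < N"
  shows "(\<forall>x\<in>VV N. x \<noteq> 0 \<longrightarrow> (fmap N T ^^ (card (UNIV::'a set) ^ N - 1)) x = x \<and>
            (\<forall>k. 0<k \<and> k < card (UNIV::'a set) ^ N - 1 \<longrightarrow> (fmap N T ^^ k) x \<noteq> x))
   \<longleftrightarrow> (T ^\<^sub>m (card (UNIV::'a set) ^ N - 1) = 1\<^sub>m N \<and>
        (\<forall>k. 0<k \<and> k < card (UNIV::'a set) ^ N - 1 \<longrightarrow> T ^\<^sub>m k \<noteq> 1\<^sub>m N))"
  (is "?L \<longleftrightarrow> ?R")
proof -
  define Q where "Q = card (UNIV::'a set)"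
  define M where "M = Q ^ N - 1"
  have Q2: "2 \<le> Q" unfolding Q_def by (rule card_ge2)
  have QN: "2 \<le> Q ^ N"
  proof -
    have "Q ^ 1 \<le> Q ^ N" using Q2 N by (intro power_increasing) auto
    then show ?thesis using Q2 by simp
  qed
  have Mpos: "0 < M" unfolding M_def using QN by simp
  let ?f = "fmap N T"
  define e0 where "e0 = (\<lambda>t::nat. if t = 0 then (1::'a) else 0)"
  have e0: "e0 \<in> VV N" "e0 \<noteq> 0" using N by (auto simp: e0_def VV_def fun_eq_iff)
  have "?L \<longleftrightarrow> (\<forall>x\<in>VV N. x \<noteq> 0 \<longrightarrow> (?f ^^ M) x = x \<and> (\<forall>k. 0<k \<and> k < M \<longrightarrow> (?f ^^ k) x \<noteq> x))"
    unfolding M_def Q_def ..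
  also have "\<dots> \<longleftrightarrow> (per ?f (VV N) M \<and> (\<forall>k. 0<k \<and> k < M \<longrightarrow> \<not> per ?f (VV N) k))"
  proof
    assume H: "\<forall>x\<in>VV N. x \<noteq> 0 \<longrightarrow> (?f ^^ M) x = x \<and> (\<forall>k. 0<k \<and> k < M \<longrightarrow> (?f ^^ k) x \<noteq> x)"
    have "per ?f (VV N) M" unfolding per_def
    proof
      fix x :: "nat \<Rightarrow> 'a" assume x: "x \<in> VV N"
      show "(?f ^^ M) x = x"
      proof (cases "x = 0")
        case True then show ?thesis by (simp add: fmap_pow_zero)
      qed (use H x in blast)
    qed
    moreover have "\<forall>k. 0<k \<and> k < M \<longrightarrow> \<not> per ?f (VV N) k"
    proof (intro allI impI notI)
      fix k assume k: "0<k \<and> k < M" and p: "per ?f (VV N) k"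
      have "(?f ^^ k) e0 = e0" using p e0 by (simp add: per_def)
      then show False using H e0 k by blast
    qed
    ultimately show "per ?f (VV N) M \<and> (\<forall>k. 0<k \<and> k < M \<longrightarrow> \<not> per ?f (VV N) k)" ..
  next
    assume H: "per ?f (VV N) M \<and> (\<forall>k. 0<k \<and> k < M \<longrightarrow> \<not> per ?f (VV N) k)"
    interpret C: core "VV N" ?f Q M
    proof
      show "finite (VV N :: (nat \<Rightarrow> 'a) set)" by (rule finite_VV)
      show "(0::nat\<Rightarrow>'a) \<in> VV N" by (simp add: VV_def)
      show "\<And>x y :: nat \<Rightarrow> 'a. x \<in> VV N \<Longrightarrow> y \<in> VV N \<Longrightarrow> x + y \<in> VV N" by (simp add: VV_def)
      show "\<And>x :: nat \<Rightarrow> 'a. x \<in> VV N \<Longrightarrow> - x \<in> VV N" by (simp add: VV_def)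
      show "\<And>x. x \<in> VV N \<Longrightarrow> ?f x \<in> VV N" by (rule fmap_VV)
      show "\<And>x y. ?f (x + y) = ?f x + ?f y" by (rule fmap_add)
      show "\<And>x. x \<in> VV N \<Longrightarrow> (?f ^^ M) x = x" using H by (simp add: per_def)
      show "0 < M" by (rule Mpos)
      show "\<And>x :: nat \<Rightarrow> 'a. x \<in> VV N \<Longrightarrow> of_nat Q * x = 0"
        unfolding Q_def by (simp add: of_nat_fun of_nat_card_zero fun_eq_iff)
      show "coprime Q M" unfolding M_def using coprime_pow_minus1[OF N] Q2 by simp
    qed
    show "\<forall>x\<in>VV N. x \<noteq> 0 \<longrightarrow> (?f ^^ M) x = x \<and> (\<forall>k. 0<k \<and> k < M \<longrightarrow> (?f ^^ k) x \<noteq> x)"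
    proof (intro ballI impI conjI allI)
      fix x :: "nat \<Rightarrow> 'a" assume x: "x \<in> VV N" "x \<noteq> 0"
      show "(?f ^^ M) x = x" using H x by (simp add: per_def)
      fix k assume k: "0<k \<and> k<M"
      show "(?f ^^ k) x \<noteq> x"
      proof
        assume fx: "(?f ^^ k) x = x"
        have cV: "card (VV N :: (nat \<Rightarrow> 'a) set) = M + 1" unfolding card_VV M_def Q_def using QN Q_def by simp
        have "M \<le> k" using C.main[OF cV _ x(1) x(2) _ fx] H k by blast
        then show False using k by simp
      qed
    qed
  qed
  also have "\<dots> \<longleftrightarrow> ?R" unfolding per_iff_pow[OF T] M_def Q_def ..
  finally show ?thesis .
qed

lemma pow_left: assumes T: "T \<in> carrier_mat n n" shows "T ^\<^sub>m (Suc k) = T * T ^\<^sub>m k"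
proof (induction k)
  case 0 show ?case using T by simp
next
  case (Suc k)
  have "T ^\<^sub>m Suc (Suc k) = (T * T ^\<^sub>m k) * T" using Suc by simp
  also have "\<dots> = T * (T ^\<^sub>m k * T)" using T by (intro assoc_mult_mat) auto
  finally show ?case by simp
qed

lemma finite_carrier_mat: "finite (carrier_mat n n :: 'a::finite mat set)"
proof -
  let ?g = "\<lambda>A::'a mat. restrict (\<lambda>p. A $$ p) ({..<n} \<times> {..<n})"
  have inj: "inj_on ?g (carrier_mat n n)"
  proof (rule inj_onI)
    fix A B :: "'a mat" assume A: "A \<in> carrier_mat n n" and B: "B \<in> carrier_mat n n" and e: "?g A = ?g B"
    show "A = B"
    proof (rule eq_matI)
      fix i j assume "i < dim_row B" "j < dim_col B"
      then have "(i,j) \<in> {..<n} \<times> {..<n}" using B by auto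
      then show "A $$ (i,j) = B $$ (i,j)" using fun_cong[OF e, of "(i,j)"] by simp
    qed (use A B in auto)
  qed
  have "?g ` carrier_mat n n \<subseteq> PiE ({..<n} \<times> {..<n}) (\<lambda>_. UNIV)"
    by (intro image_subsetI, subst restrict_PiE_iff) auto
  moreover have "finite (PiE ({..<n} \<times> {..<n}) (\<lambda>_. UNIV :: 'a set))" by (rule finite_PiE) auto
  ultimately have "finite (?g ` carrier_mat n n)" by (rule finite_subset)
  then show ?thesis using inj by (rule finite_imageD)
qed

lemma cancel_pow:
  assumes T: "T \<in> carrier_mat n n" and B: "B \<in> carrier_mat n n" and BT: "B * T = 1\<^sub>m n"
  shows "T ^\<^sub>m i = T ^\<^sub>m (i + d) \<Longrightarrow> T ^\<^sub>m d = 1\<^sub>m n"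
proof (induction i)
  case 0 then show ?case using T by simp
next
  case (Suc i)
  have "T * T ^\<^sub>m i = T * T ^\<^sub>m (i + d)" using Suc.prems pow_left[OF T] by (metis add_Suc)
  then have "B * (T * T ^\<^sub>m i) = B * (T * T ^\<^sub>m (i + d))" by simp
  moreover have "\<And>X. X \<in> carrier_mat n n \<Longrightarrow> B * (T * X) = X"
    using T B BT by (metis assoc_mult_mat left_mult_one_mat)
  ultimately have "T ^\<^sub>m i = T ^\<^sub>m (i + d)" using T by simp
  then show ?case by (rule Suc.IH)
qed

lemma order_iff:
  fixes T :: "'a::{finite,field} mat"
  assumes T: "T \<in> carrier_mat N N" and M: "0 < M"
  shows "(invertible_mat T \<and> mat_order T = M) \<longleftrightarrow>
         (T ^\<^sub>m M = 1\<^sub>m N \<and> (\<forall>k. 0<k \<and> k < M \<longrightarrow> T ^\<^sub>m k \<noteq> 1\<^sub>m N))"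
proof
  assume H: "invertible_mat T \<and> mat_order T = M"
  obtain B where B: "inverts_mat T B" "inverts_mat B T" using H by (auto simp: invertible_mat_def)
  have TB: "T * B = 1\<^sub>m N" using B(1) T by (simp add: inverts_mat_def)
  have dB: "dim_col B = N" using TB T by (metis index_mult_mat(3) index_one_mat(3))
  have BT0: "B * T = 1\<^sub>m (dim_row B)" using B(2) by (simp add: inverts_mat_def)
  have "dim_row B = N" using BT0 T by (metis index_mult_mat(2,3) index_one_mat(2,3) carrier_matD(2))
  then have Bc: "B \<in> carrier_mat N N" and BT: "B * T = 1\<^sub>m N" using dB BT0 by auto
  have "\<not> inj (\<lambda>k. T ^\<^sub>m k)"
  proof
    assume inj: "inj (\<lambda>k. T ^\<^sub>m k)"
    have "range (\<lambda>k. T ^\<^sub>m k) \<subseteq> carrier_mat N N" using T by auto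
    then have "finite (range (\<lambda>k. T ^\<^sub>m k))" using finite_carrier_mat finite_subset by blast
    then have "finite (UNIV :: nat set)" using inj by (rule finite_imageD)
    then show False by simp
  qed
  then obtain i j where ij: "i \<noteq> j" "T ^\<^sub>m i = T ^\<^sub>m j" by (auto simp: inj_def)
  have "\<exists>d>0. T ^\<^sub>m d = 1\<^sub>m N"
  proof (cases "i < j")
    case True
    have e: "i + (j - i) = j" using True by simp
    have "T ^\<^sub>m i = T ^\<^sub>m (i + (j - i))" unfolding e by (rule ij(2))
    then have "T ^\<^sub>m (j - i) = 1\<^sub>m N" by (rule cancel_pow[OF T Bc BT])
    then show ?thesis using True by (intro exI[of _ "j - i"]) simp
  next
    case False
    have e: "j + (i - j) = i" using False by simp
    have "T ^\<^sub>m j = T ^\<^sub>m (j + (i - j))" unfolding e by (rule ij(2)[symmetric])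
    then have "T ^\<^sub>m (i - j) = 1\<^sub>m N" by (rule cancel_pow[OF T Bc BT])
    then show ?thesis using False ij(1) by (intro exI[of _ "i - j"]) simp
  qed
  then have ex: "\<exists>d. 0 < d \<and> T ^\<^sub>m d = 1\<^sub>m (dim_row T)" using T by auto
  have mo: "mat_order T = (LEAST k. 0 < k \<and> T ^\<^sub>m k = 1\<^sub>m (dim_row T))" by (simp add: mat_order_def)
  have "0 < mat_order T \<and> T ^\<^sub>m (mat_order T) = 1\<^sub>m (dim_row T)" unfolding mo by (rule LeastI_ex[OF ex])
  moreover have "\<forall>k. 0<k \<and> k < mat_order T \<longrightarrow> T ^\<^sub>m k \<noteq> 1\<^sub>m (dim_row T)"
    unfolding mo using not_less_Least by blast
  ultimately show "T ^\<^sub>m M = 1\<^sub>m N \<and> (\<forall>k. 0<k \<and> k < M \<longrightarrow> T ^\<^sub>m k \<noteq> 1\<^sub>m N)" using H T by auto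
next
  assume H: "T ^\<^sub>m M = 1\<^sub>m N \<and> (\<forall>k. 0<k \<and> k < M \<longrightarrow> T ^\<^sub>m k \<noteq> 1\<^sub>m N)"
  define B where "B = T ^\<^sub>m (M - 1)"
  have MS: "M = Suc (M - 1)" using M by simp
  have "T * B = 1\<^sub>m N" unfolding B_def using pow_left[OF T, of "M - 1"] MS H by simp
  moreover have "B * T = 1\<^sub>m N" unfolding B_def using MS H by (metis pow_mat.simps(2))
  ultimately have "invertible_mat T" using T
    by (auto simp: invertible_mat_def inverts_mat_def square_mat.simps B_def intro!: exI[of _ B])
  moreover have "mat_order T = M"
    unfolding mat_order_def
  proof (rule Least_equality)
    show "0 < M \<and> T ^\<^sub>m M = 1\<^sub>m (dim_row T)" using H M T by simp
    show "\<And>y. 0 < y \<and> T ^\<^sub>m y = 1\<^sub>m (dim_row T) \<Longrightarrow> M \<le> y" using H T by (metis carrier_matD(1) not_le)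
  qed
  ultimately show "invertible_mat T \<and> mat_order T = M" by simp
qed

lemma dm: fixes l m j :: nat assumes "l < m" shows "(j*m + l) div m = j" "(j*m + l) mod m = l"
  using assms by auto

lemma idx_lt: fixes l m j n :: nat assumes "l < m" "j < n" shows "j*m + l < m*n"
proof -
  have "j*m + l < j*m + m" using assms by simp
  also have "\<dots> = (j+1)*m" by simp
  also have "\<dots> \<le> n*m" using assms by (intro mult_le_mono1) simp
  finally show ?thesis by (simp add: mult.commute)
qed

lemma sum_split: "(\<Sum>r<m*n. g r) = (\<Sum>j<n. \<Sum>l<m. g (j*m + l :: nat))"
proof -
  have "(\<Sum>r<m*n. g r) = (\<Sum>j<n. sum g {j*m..<j*m+m})"
    using sum.nat_group[of g m n] by (simp add: mult.commute)
  also have "\<dots> = (\<Sum>j<n. \<Sum>l<m. g (j*m + l))"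
  proof (rule sum.cong[OF refl])
    fix j
    have "sum g {0 + j*m..<m + j*m} = sum (\<lambda>l. g (l + j*m)) {0..<m}" by (rule sum.shift_bounds_nat_ivl)
    then show "sum g {j*m..<j*m+m} = (\<Sum>l<m. g (j*m + l))" by (simp add: atLeast0LessThan add.commute)
  qed
  finally show ?thesis .
qed

definition enc :: "nat \<Rightarrow> nat \<Rightarrow> (nat \<Rightarrow> 'a::zero vec) \<Rightarrow> nat \<Rightarrow> 'a" where
  "enc m n w = (\<lambda>t. if t < m*n then w (t div m) $ (t mod m) else 0)"

lemma enc_idx: "l < m \<Longrightarrow> j < n \<Longrightarrow> enc m n w (j*m + l) = w j $ l"
  using idx_lt[of l m j n] by (simp add: enc_def dm)

lemma bc_index:
  assumes "r < m*n" "c < m*n"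
  shows "block_companion m n C $$ (r,c) = (if c div m = n - 1 then (C ! (r div m)) $$ (r mod m, c mod m)
      else if r div m = c div m + 1 \<and> r mod m = c mod m then 1 else 0)"
  using assms by (simp add: block_companion_def)

lemma bc_carrier: "block_companion m n C \<in> carrier_mat (m*n) (m*n)"
  by (simp add: block_companion_def)

lemma enc_step:
  fixes C :: "'a::field mat list"
  assumes m: "0 < m"
  shows "enc m n (lfsr_step m n C w) = fmap (m*n) (block_companion m n C) (enc m n w)"
proof (rule ext)
  fix c
  let ?T = "block_companion m n C"
  show "enc m n (lfsr_step m n C w) c = fmap (m*n) ?T (enc m n w) c"
  proof (cases "c < m*n")
    case False then show ?thesis by (simp add: enc_def fmap_def)
  next
    case True
    define i where "i = c div m"
    define l0 where "l0 = c mod m"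
    have i: "i < n" unfolding i_def using True m by (simp add: div_less_iff_less_mult mult.commute)
    have l0: "l0 < m" unfolding l0_def using m by simp
    have c: "c = i*m + l0" unfolding i_def l0_def by simp
    have lhs: "enc m n (lfsr_step m n C w) c = lfsr_step m n C w i $ l0"
      using True by (simp add: enc_def i_def l0_def)
    have rhs: "fmap (m*n) ?T (enc m n w) c = (\<Sum>r<m*n. enc m n w r * ?T $$ (r,c))"
      using True by (simp add: fmap_def)
    show ?thesis
    proof (cases "i + 1 < n")
      case True2: True
      have ni: "c div m \<noteq> n - 1" using True2 unfolding i_def by simp
      have "(\<Sum>r<m*n. enc m n w r * ?T $$ (r,c)) = (\<Sum>r<m*n. if r = (i+1)*m + l0 then enc m n w r else 0)"
      proof (rule sum.cong[OF refl])
        fix r assume r: "r \<in> {..<m*n}"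
        have "(r div m = c div m + 1 \<and> r mod m = c mod m) \<longleftrightarrow> r = (i+1)*m + l0"
          using l0 unfolding i_def[symmetric] l0_def[symmetric]
          by (metis dm div_mult_mod_eq mult.commute)
        then show "enc m n w r * ?T $$ (r,c) = (if r = (i+1)*m + l0 then enc m n w r else 0)"
          using r True ni by (simp add: bc_index)
      qed
      also have "\<dots> = enc m n w ((i+1)*m + l0)"
        using idx_lt[OF l0 True2] by simp
      also have "\<dots> = w (i+1) $ l0" using enc_idx[OF l0 True2] .
      finally show ?thesis using lhs rhs True2 by (simp add: lfsr_step_def)
    next
      case False2: False
      have ni: "c div m = n - 1" "i = n - 1" using False2 i unfolding i_def by auto
      have "(\<Sum>r<m*n. enc m n w r * ?T $$ (r,c)) = (\<Sum>r<m*n. enc m n w r * (C ! (r div m)) $$ (r mod m, l0))"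
        using True ni by (intro sum.cong) (auto simp: bc_index l0_def)
      also have "\<dots> = (\<Sum>j<n. \<Sum>l<m. enc m n w (j*m+l) * (C ! ((j*m+l) div m)) $$ ((j*m+l) mod m, l0))"
        by (rule sum_split)
      also have "\<dots> = (\<Sum>j<n. \<Sum>l<m. (w j $ l) * (C ! j) $$ (l, l0))"
        by (intro sum.cong refl) (simp add: enc_idx dm)
      also have "\<dots> = lfsr_step m n C w i $ l0"
        using False2 l0 by (simp add: lfsr_step_def)
      finally show ?thesis using lhs rhs by simp
    qed
  qed
qed

lemma step_carrier:
  assumes "\<forall>i<n. w i \<in> carrier_vec m"
  shows "\<forall>i<n. lfsr_step m n C w i \<in> carrier_vec m"
  using assms by (auto simp: lfsr_step_def)

lemma steps_carrier:
  assumes "\<forall>i<n. w i \<in> carrier_vec m"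
  shows "\<forall>i<n. (lfsr_step m n C ^^ k) w i \<in> carrier_vec m"
proof (induction k)
  case 0 then show ?case using assms by simp
next
  case (Suc k) then show ?case using step_carrier[OF Suc.IH, of C] by simp
qed

lemma enc_steps:
  fixes C :: "'a::field mat list"
  assumes m: "0 < m"
  shows "enc m n ((lfsr_step m n C ^^ k) w) = (fmap (m*n) (block_companion m n C) ^^ k) (enc m n w)"
  by (induction k) (simp_all add: enc_step[OF m])

lemma window_shift: "i < n \<Longrightarrow> ((lfsr_step m n C ^^ i) w) 0 = w i"
proof (induction i arbitrary: w)
  case (Suc i)
  have "((lfsr_step m n C ^^ Suc i) w) 0 = ((lfsr_step m n C ^^ i) (lfsr_step m n C w)) 0"
    by (simp only: funpow_Suc_right comp_apply)
  also have "\<dots> = lfsr_step m n C w i" using Suc by simp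
  also have "\<dots> = w (Suc i)" using Suc.prems by (simp add: lfsr_step_def)
  finally show ?case .
qed simp

lemma window_from_enc:
  assumes "\<forall>i<n. w i \<in> carrier_vec m" "i < n"
  shows "w i = vec m (\<lambda>l. enc m n w (i*m + l))"
  using assms by (auto simp: enc_idx)

lemma seq_enc:
  fixes C :: "'a::field mat list"
  assumes m: "0 < m" and n: "0 < n" and s0: "\<forall>i<n. s0 i \<in> carrier_vec m"
  shows "lfsr_seq m n C s0 k = vec m (\<lambda>l. (fmap (m*n) (block_companion m n C) ^^ k) (enc m n s0) l)"
proof -
  have "lfsr_seq m n C s0 k = (lfsr_step m n C ^^ k) s0 0" by (simp add: lfsr_seq_def)
  also have "\<dots> = vec m (\<lambda>l. enc m n ((lfsr_step m n C ^^ k) s0) (0*m + l))"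
    by (rule window_from_enc[OF steps_carrier[OF s0] n])
  also have "\<dots> = vec m (\<lambda>l. (fmap (m*n) (block_companion m n C) ^^ k) (enc m n s0) l)"
    by (simp add: enc_steps[OF m])
  finally show ?thesis .
qed

lemma period_iff:
  fixes C :: "'a::field mat list"
  assumes m: "0 < m" and n: "0 < n" and s0: "\<forall>i<n. s0 i \<in> carrier_vec m"
  shows "(\<forall>j. lfsr_seq m n C s0 (j + r) = lfsr_seq m n C s0 j) \<longleftrightarrow>
         (fmap (m*n) (block_companion m n C) ^^ r) (enc m n s0) = enc m n s0"
proof
  let ?f = "fmap (m*n) (block_companion m n C)"
  let ?st = "lfsr_step m n C"
  assume H: "\<forall>j. lfsr_seq m n C s0 (j + r) = lfsr_seq m n C s0 j"
  show "(?f ^^ r) (enc m n s0) = enc m n s0"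
  proof (rule ext)
    fix t
    show "(?f ^^ r) (enc m n s0) t = enc m n s0 t"
    proof (cases "t < m*n")
      case False
      then show ?thesis unfolding enc_steps[OF m, symmetric] by (simp add: enc_def)
    next
      case True
      define i where "i = t div m"
      define l where "l = t mod m"
      have i: "i < n" unfolding i_def using True m by (simp add: div_less_iff_less_mult mult.commute)
      have l: "l < m" unfolding l_def using m by simp
      have t: "t = i*m + l" unfolding i_def l_def by simp
      have "(?st ^^ r) s0 i = (?st ^^ i) ((?st ^^ r) s0) 0"
        using window_shift[OF i, where w="(?st ^^ r) s0" and C=C and m=m] by simp
      also have "\<dots> = (?st ^^ (i + r)) s0 0" by (simp add: funpow_add)
      also have "\<dots> = lfsr_seq m n C s0 (i + r)" by (simp add: lfsr_seq_def)
      also have "\<dots> = lfsr_seq m n C s0 i" using H by simp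
      also have "\<dots> = s0 i" using window_shift[OF i, where w="s0" and C=C and m=m] by (simp add: lfsr_seq_def)
      finally have e: "(?st ^^ r) s0 i = s0 i" .
      have "(?f ^^ r) (enc m n s0) t = enc m n ((?st ^^ r) s0) t" by (simp add: enc_steps[OF m])
      also have "\<dots> = (?st ^^ r) s0 i $ l" unfolding t by (rule enc_idx[OF l i])
      also have "\<dots> = s0 i $ l" using e by simp
      also have "\<dots> = enc m n s0 t" unfolding t by (rule enc_idx[OF l i, symmetric])
      finally show ?thesis .
    qed
  qed
next
  let ?f = "fmap (m*n) (block_companion m n C)"
  assume H: "(?f ^^ r) (enc m n s0) = enc m n s0"
  show "\<forall>j. lfsr_seq m n C s0 (j + r) = lfsr_seq m n C s0 j"
  proof
    fix j
    have "(?f ^^ (j + r)) (enc m n s0) = (?f ^^ j) (enc m n s0)" using H by (simp add: funpow_add)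
    then show "lfsr_seq m n C s0 (j + r) = lfsr_seq m n C s0 j" by (simp add: seq_enc[OF m n s0])
  qed
qed

lemma enc_VV: "enc m n w \<in> VV (m*n)" by (simp add: enc_def VV_def)

lemma enc_nonzero:
  assumes m: "0 < m" and s0: "\<forall>i<n. s0 i \<in> carrier_vec m"
  shows "(\<exists>i<n. s0 i \<noteq> 0\<^sub>v m) \<longleftrightarrow> enc m n s0 \<noteq> 0"
proof
  assume "\<exists>i<n. s0 i \<noteq> 0\<^sub>v m"
  then obtain i where i: "i < n" "s0 i \<noteq> 0\<^sub>v m" by blast
  then obtain l where l: "l < m" "s0 i $ l \<noteq> 0" using s0 by (metis carrier_vecD eq_vecI index_zero_vec(1,2))
  have "enc m n s0 (i*m + l) \<noteq> 0" using enc_idx[OF l(1) i(1), where w=s0] l by simp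
  then show "enc m n s0 \<noteq> 0" by auto
next
  assume "enc m n s0 \<noteq> 0"
  then obtain t where t: "enc m n s0 t \<noteq> 0" by (auto simp: fun_eq_iff)
  then have tN: "t < m*n" by (auto simp: enc_def split: if_splits)
  define i where "i = t div m"
  have i: "i < n" unfolding i_def using tN m by (simp add: div_less_iff_less_mult mult.commute)
  have "s0 i $ (t mod m) \<noteq> 0" using t tN by (simp add: enc_def i_def)
  then have "s0 i \<noteq> 0\<^sub>v m" using m by auto
  then show "\<exists>i<n. s0 i \<noteq> 0\<^sub>v m" using i by blast
qed

definition dec :: "nat \<Rightarrow> (nat \<Rightarrow> 'a) \<Rightarrow> nat \<Rightarrow> 'a vec" where
  "dec m x = (\<lambda>i. vec m (\<lambda>l. x (i*m + l)))"

lemma dec_carrier: "\<forall>i<n. dec m x i \<in> carrier_vec m" by (simp add: dec_def)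

lemma enc_dec: assumes m: "0 < m" and x: "x \<in> VV (m*n)" shows "enc m n (dec m x) = x"
proof (rule ext)
  fix t show "enc m n (dec m x) t = x t"
  proof (cases "t < m*n")
    case True
    have "t mod m < m" using m by simp
    then show ?thesis using True by (simp add: enc_def dec_def)
  qed (use x in \<open>simp add: enc_def VV_def\<close>)
qed

lemma prim_iff:
  fixes C :: "'a::{finite,field} mat list"
  assumes m: "0 < m" and n: "0 < n"
  shows "primitive_lfsr m n C \<longleftrightarrow>
    (\<forall>x\<in>VV (m*n). x \<noteq> 0 \<longrightarrow> (fmap (m*n) (block_companion m n C) ^^ (card (UNIV::'a set) ^ (m*n) - 1)) x = x \<and>
       (\<forall>k. 0<k \<and> k < card (UNIV::'a set) ^ (m*n) - 1 \<longrightarrow> (fmap (m*n) (block_companion m n C) ^^ k) x \<noteq> x))"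
proof -
  define M where "M = card (UNIV::'a set) ^ (m*n) - 1"
  let ?f = "fmap (m*n) (block_companion m n C)"
  have Q2: "2 \<le> card (UNIV::'a set)" by (rule card_ge2)
  have "card (UNIV::'a set) ^ 1 \<le> card (UNIV::'a set) ^ (m*n)" using Q2 m n by (intro power_increasing) auto
  then have Mpos: "0 < M" unfolding M_def using Q2 by simp
  have per: "periodic_with_period (lfsr_seq m n C s0) M \<longleftrightarrow>
     ((?f ^^ M) (enc m n s0) = enc m n s0 \<and> (\<forall>k. 0<k \<and> k < M \<longrightarrow> (?f ^^ k) (enc m n s0) \<noteq> enc m n s0))"
    if s0: "\<forall>i<n. s0 i \<in> carrier_vec m" for s0 :: "nat \<Rightarrow> 'a vec"
    unfolding periodic_with_period_def period_iff[OF m n s0] using Mpos by auto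
  show ?thesis unfolding M_def[symmetric]
  proof
    assume P: "primitive_lfsr m n C"
    show "\<forall>x\<in>VV (m*n). x \<noteq> 0 \<longrightarrow> (?f ^^ M) x = x \<and> (\<forall>k. 0<k \<and> k < M \<longrightarrow> (?f ^^ k) x \<noteq> x)"
    proof (intro ballI impI)
      fix x :: "nat \<Rightarrow> 'a" assume x: "x \<in> VV (m*n)" "x \<noteq> 0"
      have c: "\<forall>i<n. dec m x i \<in> carrier_vec m" by (rule dec_carrier)
      have e: "enc m n (dec m x) = x" by (rule enc_dec[OF m x(1)])
      have nz: "\<exists>i<n. dec m x i \<noteq> 0\<^sub>v m" using enc_nonzero[OF m c] e x(2) by simp
      have "periodic_with_period (lfsr_seq m n C (dec m x)) M"
        using P c nz unfolding primitive_lfsr_def M_def by blast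
      then show "(?f ^^ M) x = x \<and> (\<forall>k. 0<k \<and> k < M \<longrightarrow> (?f ^^ k) x \<noteq> x)"
        using per[OF c] e by simp
    qed
  next
    assume H: "\<forall>x\<in>VV (m*n). x \<noteq> 0 \<longrightarrow> (?f ^^ M) x = x \<and> (\<forall>k. 0<k \<and> k < M \<longrightarrow> (?f ^^ k) x \<noteq> x)"
    show "primitive_lfsr m n C" unfolding primitive_lfsr_def M_def[symmetric]
    proof (intro allI impI)
      fix s0 :: "nat \<Rightarrow> 'a vec" assume s0: "(\<forall>i<n. s0 i \<in> carrier_vec m) \<and> (\<exists>i<n. s0 i \<noteq> 0\<^sub>v m)"
      have nz: "enc m n s0 \<noteq> 0" using enc_nonzero[OF m] s0 by blast
      show "periodic_with_period (lfsr_seq m n C s0) M"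
        using per[of s0] s0 H enc_VV[of m n s0] nz by blast
    qed
  qed
qed

lemma bc_inj:
  assumes m: "0 < m" and n: "0 < n"
  shows "inj_on (block_companion m n) (coeff_tuples m n :: 'a::field mat list set)"
proof (rule inj_onI)
  fix C D :: "'a mat list"
  assume C: "C \<in> coeff_tuples m n" and D: "D \<in> coeff_tuples m n" and e: "block_companion m n C = block_companion m n D"
  have lC: "length C = n" "set C \<subseteq> carrier_mat m m" using C by (auto simp: coeff_tuples_def)
  have lD: "length D = n" "set D \<subseteq> carrier_mat m m" using D by (auto simp: coeff_tuples_def)
  have ent: "C ! j $$ (l,k) = D ! j $$ (l,k)" if j: "j < n" and l: "l < m" and k: "k < m" for j l k
  proof -
    have n1: "n - 1 < n" using n by simp
    have r: "j*m + l < m*n" by (rule idx_lt[OF l j])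
    have c: "(n-1)*m + k < m*n" by (rule idx_lt[OF k n1])
    have "block_companion m n C $$ (j*m+l, (n-1)*m+k) = C ! j $$ (l,k)"
      using bc_index[OF r c] l k by (simp add: dm[OF l] dm[OF k])
    moreover have "block_companion m n D $$ (j*m+l, (n-1)*m+k) = D ! j $$ (l,k)"
      using bc_index[OF r c] l k by (simp add: dm[OF l] dm[OF k])
    ultimately show ?thesis using e by simp
  qed
  show "C = D"
  proof (rule nth_equalityI)
    show "length C = length D" using lC lD by simp
    fix j assume "j < length C"
    then have j: "j < n" using lC by simp
    have cC: "C ! j \<in> carrier_mat m m" using lC j by (auto simp: subset_iff)
    have cD: "D ! j \<in> carrier_mat m m" using lD j by (auto simp: subset_iff)
    show "C ! j = D ! j" using ent[OF j] cC cD by (intro eq_matI) auto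
  qed
qed

theorem theorem5p2:
  fixes m n :: nat
  assumes "0 < m" and "0 < n"
  shows "real (card {C \<in> coeff_tuples m n. primitive_lfsr m n (C :: ('a::{finite,field}) mat list)})
           = Upsilon m n (card (UNIV :: 'a set))
     \<longleftrightarrow> real (card {T \<in> BCM m n TYPE('a). invertible_mat T \<and>
                     mat_order T = card (UNIV :: 'a set) ^ (m * n) - 1})
           = Upsilon m n (card (UNIV :: 'a set))"
proof -
  define M where "M = card (UNIV::'a set) ^ (m*n) - 1"
  have Q2: "2 \<le> card (UNIV::'a set)" by (rule card_ge2)
  have "card (UNIV::'a set) ^ 1 \<le> card (UNIV::'a set) ^ (m*n)" using Q2 assms by (intro power_increasing) auto
  then have Mpos: "0 < M" unfolding M_def using Q2 by simp
  have mn: "0 < m*n" using assms by simp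
  have eq: "primitive_lfsr m n C \<longleftrightarrow> (invertible_mat (block_companion m n C) \<and> mat_order (block_companion m n C) = M)"
    for C :: "'a mat list"
  proof -
    note a = prim_iff[OF assms, of C]
    note b = key_core[OF bc_carrier[of m n C] mn]
    note c = order_iff[OF bc_carrier[of m n C] Mpos]
    from a b c show ?thesis unfolding M_def by blast
  qed
  have set: "{T \<in> BCM m n TYPE('a). invertible_mat T \<and> mat_order T = M}
      = block_companion m n ` {C \<in> coeff_tuples m n. primitive_lfsr m n (C :: 'a mat list)}"
    unfolding BCM_def using eq by auto
  have "card {C \<in> coeff_tuples m n. primitive_lfsr m n (C :: 'a mat list)}
      = card (block_companion m n ` {C \<in> coeff_tuples m n. primitive_lfsr m n (C :: 'a mat list)})"
    by (rule card_image[symmetric], rule inj_on_subset[OF bc_inj[OF assms]]) auto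
  also have "\<dots> = card {T \<in> BCM m n TYPE('a). invertible_mat T \<and> mat_order T = M}" using set by simp
  finally show ?thesis unfolding M_def by simp
qed

end
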